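(* Let $H=\pi\sigma_z/\tau$ on a qubit, $|\Phi\rangle=(|0\rangle+|1\rangle)/\sqrt2$, and $\rho=\lambda|\Phi\rangle\langle\Phi|+(1-\lambda)I/2$ with $0<\lambda<1$. Then for any TI operation $\mathcal E$ from $n$ copies of the qubit (total Hamiltonian $\sum_{i=1}^nH^{(i)}$) to one qubit with Hamiltonian $H$, $$1-\langle\Phi|\mathcal E(\rho^{\otimes n})|\Phi\rangle\ \ge\ \frac1n\,\frac{1-\lambda^2}{4\lambda^2}+O\Big(\frac1{n^2}\Big)\quad(n\to\infty).$$
   Context: $H^{(i)}=I^{\otimes(i-1)}\otimes H\otimes I^{\otimes(n-i)}$. TI operation: CPTP map $\mathcal E$ with $e^{-iH_{\rm out}t}\mathcal E(\sigma)e^{iH_{\rm out}t}=\mathcal E(e^{-iH_{\rm in}t}\sigma e^{iH_{\rm in}t})$ for all states $\sigma$ and all $t\in\mathbb R$. *)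

theory Defs
  imports Complex_Main "Jordan_Normal_Form.Matrix"
begin

text \<open>Kronecker (tensor) product of matrices; index i of the product corresponds
  to the pair (i div dim_row B, i mod dim_row B), i.e. the first factor is the
  most significant (leftmost) tensor factor.\<close>
definition kron :: "complex mat \<Rightarrow> complex mat \<Rightarrow> complex mat" where
  "kron A B = mat (dim_row A * dim_row B) (dim_col A * dim_col B)
     (\<lambda>(i,j). A $$ (i div dim_row B, j div dim_col B) * B $$ (i mod dim_row B, j mod dim_col B))"

fun tensor_pow :: "nat \<Rightarrow> complex mat \<Rightarrow> complex mat" where
  "tensor_pow 0 A = 1\<^sub>m 1"
| "tensor_pow (Suc n) A = kron A (tensor_pow n A)"

definition mat_exp :: "complex mat \<Rightarrow> complex mat" where
  "mat_exp A = mat (dim_row A) (dim_col A) (\<lambda>(i,j). \<Sum>k. (A ^\<^sub>m k) $$ (i,j) / of_nat (fact k))"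

definition evol :: "complex mat \<Rightarrow> real \<Rightarrow> complex mat" where
  "evol H t = mat_exp ((- \<i> * of_real t) \<cdot>\<^sub>m H)"

definition sigma_z :: "complex mat" where
  "sigma_z = mat 2 2 (\<lambda>(i,j). if i = j then (if i = 0 then 1 else -1) else 0)"

definition qubit_ham :: "real \<Rightarrow> complex mat" where
  "qubit_ham \<tau> = (of_real (pi / \<tau>)) \<cdot>\<^sub>m sigma_z"

definition local_ham :: "complex mat \<Rightarrow> nat \<Rightarrow> nat \<Rightarrow> complex mat" where
  "local_ham H n i = kron (kron (tensor_pow (i - 1) (1\<^sub>m 2)) H) (tensor_pow (n - i) (1\<^sub>m 2))"

definition total_ham :: "complex mat \<Rightarrow> nat \<Rightarrow> complex mat" where
  "total_ham H n = foldr (\<lambda>i M. local_ham H n i + M) [1..<Suc n] (0\<^sub>m (2^n) (2^n))"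

definition mtrace :: "complex mat \<Rightarrow> complex" where
  "mtrace A = (\<Sum>i<dim_row A. A $$ (i,i))"

definition qform :: "complex mat \<Rightarrow> complex vec \<Rightarrow> complex" where
  "qform A v = (\<Sum>i<dim_vec v. \<Sum>j<dim_vec v. cnj (v $ i) * A $$ (i,j) * v $ j)"

definition psd :: "nat \<Rightarrow> complex mat \<Rightarrow> bool" where
  "psd d A \<longleftrightarrow> A \<in> carrier_mat d d \<and>
     (\<forall>v \<in> carrier_vec d. Im (qform A v) = 0 \<and> 0 \<le> Re (qform A v))"

definition density :: "nat \<Rightarrow> complex mat \<Rightarrow> bool" where
  "density d A \<longleftrightarrow> psd d A \<and> mtrace A = 1"

text \<open>(id_k \<otimes> E) applied to a (k*din) x (k*din) matrix viewed as k x k blocks.\<close>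
definition ampliate :: "nat \<Rightarrow> nat \<Rightarrow> nat \<Rightarrow> (complex mat \<Rightarrow> complex mat) \<Rightarrow> complex mat \<Rightarrow> complex mat" where
  "ampliate k din dout E X = mat (k * dout) (k * dout)
     (\<lambda>(i,j). E (mat din din (\<lambda>(a,b). X $$ ((i div dout) * din + a, (j div dout) * din + b)))
              $$ (i mod dout, j mod dout))"

definition cptp :: "nat \<Rightarrow> nat \<Rightarrow> (complex mat \<Rightarrow> complex mat) \<Rightarrow> bool" where
  "cptp din dout E \<longleftrightarrow>
     (\<forall>A \<in> carrier_mat din din. E A \<in> carrier_mat dout dout) \<and>
     (\<forall>A \<in> carrier_mat din din. \<forall>B \<in> carrier_mat din din. E (A + B) = E A + E B) \<and>
     (\<forall>c. \<forall>A \<in> carrier_mat din din. E (c \<cdot>\<^sub>m A) = c \<cdot>\<^sub>m E A) \<and>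
     (\<forall>A \<in> carrier_mat din din. mtrace (E A) = mtrace A) \<and>
     (\<forall>k X. psd (k * din) X \<longrightarrow> psd (k * dout) (ampliate k din dout E X))"

definition TI_op :: "nat \<Rightarrow> nat \<Rightarrow> complex mat \<Rightarrow> complex mat \<Rightarrow> (complex mat \<Rightarrow> complex mat) \<Rightarrow> bool" where
  "TI_op din dout Hin Hout E \<longleftrightarrow> cptp din dout E \<and>
     (\<forall>\<sigma> t. density din \<sigma> \<longrightarrow>
        evol Hout t * E \<sigma> * evol Hout (- t) = E (evol Hin t * \<sigma> * evol Hin (- t)))"

definition Phi :: "complex vec" where
  "Phi = vec 2 (\<lambda>_. of_real (1 / sqrt 2))"

definition proj_Phi :: "complex mat" where
  "proj_Phi = mat 2 2 (\<lambda>(i,j). Phi $ i * cnj (Phi $ j))"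

definition rho :: "real \<Rightarrow> complex mat" where
  "rho l = of_real l \<cdot>\<^sub>m proj_Phi + of_real ((1 - l) / 2) \<cdot>\<^sub>m 1\<^sub>m 2"

end

theory Submission
  imports Defs
begin


definition ct :: "complex mat \<Rightarrow> complex mat" where
  "ct A = mat (dim_col A) (dim_row A) (\<lambda>(i,j). cnj (A $$ (j,i)))"

lemma ct_dims[simp]: "dim_row (ct A) = dim_col A" "dim_col (ct A) = dim_row A"
  by (auto simp: ct_def)
lemma ct_index[simp]: "i < dim_col A \<Longrightarrow> j < dim_row A \<Longrightarrow> ct A $$ (i,j) = cnj (A $$ (j,i))"
  by (auto simp: ct_def)
lemma ct_carrier[simp]: "A \<in> carrier_mat m n \<Longrightarrow> ct A \<in> carrier_mat n m" by auto

lemma kron_dims[simp]: "dim_row (kron A B) = dim_row A * dim_row B" "dim_col (kron A B) = dim_col A * dim_col B"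
  by (auto simp: kron_def)
lemma kron_index[simp]: "i < dim_row A * dim_row B \<Longrightarrow> j < dim_col A * dim_col B \<Longrightarrow>
  kron A B $$ (i,j) = A $$ (i div dim_row B, j div dim_col B) * B $$ (i mod dim_row B, j mod dim_col B)"
  by (auto simp: kron_def)

lemma sum_mult_split: fixes p q :: nat shows "(\<Sum>k<p*q. f k) = (\<Sum>a<p. \<Sum>b<q. f (a*q+b))"
proof (induction p)
  case 0 then show ?case by simp
next
  case (Suc p)
  have "(\<Sum>k<Suc p*q. f k) = (\<Sum>k<p*q. f k) + (\<Sum>k\<in>{p*q..<p*q+q}. f k)"
    by (simp add: sum.atLeastLessThan_concat[symmetric] lessThan_atLeast0 add.commute)
  also have "(\<Sum>k\<in>{p*q..<p*q+q}. f k) = (\<Sum>b<q. f (p*q+b))"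
    by (simp add: sum.shift_bounds_nat_ivl[symmetric] lessThan_atLeast0 add.commute
      sum.atLeastLessThan_shift_bounds)
  finally show ?case using Suc by simp
qed

lemma idx_lt: "x < b \<Longrightarrow> y < d \<Longrightarrow> x*d+y < b*(d::nat)"
proof -
  assume "x < b" "y < d"
  then have "x*d + y < x*d + d" "x+1 \<le> b" by auto
  moreover have "(x+1)*d \<le> b*d" using \<open>x+1 \<le> b\<close> by (rule mult_le_mono1)
  ultimately have "x*d + y < x*d + d" "(x+1)*d \<le> b*d" by auto
  then show ?thesis by (simp add: algebra_simps)
qed

lemma kron_carrier[simp]: "A \<in> carrier_mat a b \<Longrightarrow> B \<in> carrier_mat c d \<Longrightarrow> kron A B \<in> carrier_mat (a*c) (b*d)"
  by auto

lemma kron_mult: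
  assumes A: "A \<in> carrier_mat a b" and B: "B \<in> carrier_mat c d"
    and C: "C \<in> carrier_mat b e" and D: "D \<in> carrier_mat d f"
  shows "kron A B * kron C D = kron (A * C) (B * D)"
proof (rule eq_matI)
  show "dim_row (kron A B * kron C D) = dim_row (kron (A * C) (B * D))" using A B C D by simp
  show "dim_col (kron A B * kron C D) = dim_col (kron (A * C) (B * D))" using A B C D by simp
  fix i j assume i: "i < dim_row (kron (A * C) (B * D))" and j: "j < dim_col (kron (A * C) (B * D))"
  have i': "i < a * c" and j': "j < e * f" using i j A B C D by auto
  have "(kron A B * kron C D) $$ (i,j) = (\<Sum>k<b*d. kron A B $$ (i,k) * kron C D $$ (k,j))"
    using i' j' A B C D by (simp add: scalar_prod_def atLeast0LessThan)
  also have "\<dots> = (\<Sum>x<b. \<Sum>y<d. kron A B $$ (i,x*d+y) * kron C D $$ (x*d+y,j))"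
    by (rule sum_mult_split)
  also have "\<dots> = (\<Sum>x<b. \<Sum>y<d. (A $$ (i div c, x) * C $$ (x, j div f)) * (B $$ (i mod c, y) * D $$ (y, j mod f)))"
  proof (intro sum.cong refl)
    fix x y assume x: "x \<in> {..<b}" and y: "y \<in> {..<d}"
    have k: "x*d+y < b*d" using x y by (simp add: idx_lt)
    have dv: "(x*d+y) div d = x" "(x*d+y) mod d = y" using y by auto
    show "kron A B $$ (i,x*d+y) * kron C D $$ (x*d+y,j) = (A $$ (i div c, x) * C $$ (x, j div f)) * (B $$ (i mod c, y) * D $$ (y, j mod f))"
      using i' j' k A B C D dv by (simp add: algebra_simps)
  qed
  also have "\<dots> = (\<Sum>x<b. A $$ (i div c, x) * C $$ (x, j div f)) * (\<Sum>y<d. B $$ (i mod c, y) * D $$ (y, j mod f))"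
    by (simp add: sum_product)
  also have "\<dots> = kron (A * C) (B * D) $$ (i,j)"
  proof -
    have c0: "c > 0" and f0: "f > 0" using i' j' by (auto intro: Nat.gr0I)
    have "i div c < a" using i' by (simp add: less_mult_imp_div_less)
    moreover have "j div f < e" using j' by (simp add: less_mult_imp_div_less)
    moreover have "i mod c < c" "j mod f < f" using c0 f0 by auto
    ultimately show ?thesis using i' j' A B C D
      by (simp add: scalar_prod_def atLeast0LessThan)
  qed
  finally show "(kron A B * kron C D) $$ (i,j) = kron (A * C) (B * D) $$ (i,j)" .
qed

lemma ct_kron: "ct (kron A B) = kron (ct A) (ct B)"
proof (rule eq_matI)
  fix i j assume i: "i < dim_row (kron (ct A) (ct B))" and j: "j < dim_col (kron (ct A) (ct B))"
  then have i': "i < dim_col A * dim_col B" and j': "j < dim_row A * dim_row B" by auto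
  then have "dim_col B > 0" "dim_row B > 0" by (auto intro: Nat.gr0I)
  then have "i mod dim_col B < dim_col B" "j mod dim_row B < dim_row B" by auto
  moreover have "i div dim_col B < dim_col A" "j div dim_row B < dim_row A"
    using i' j' by (auto simp: less_mult_imp_div_less)
  ultimately show "ct (kron A B) $$ (i,j) = kron (ct A) (ct B) $$ (i,j)" using i' j' by simp
qed auto

lemma ct_mult: assumes "A \<in> carrier_mat a b" "B \<in> carrier_mat b c" shows "ct (A * B) = ct B * ct A"
  using assms by (intro eq_matI) (auto simp: scalar_prod_def mult.commute)

lemma mtrace_kron: assumes "A \<in> carrier_mat a a" "B \<in> carrier_mat b b"
  shows "mtrace (kron A B) = mtrace A * mtrace B"
proof -
  have "mtrace (kron A B) = (\<Sum>k<a*b. kron A B $$ (k,k))"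
    using assms by (simp add: mtrace_def)
  also have "\<dots> = (\<Sum>x<a. \<Sum>y<b. kron A B $$ (x*b+y, x*b+y))"
    by (rule sum_mult_split)
  also have "\<dots> = (\<Sum>x<a. \<Sum>y<b. A $$ (x,x) * B $$ (y,y))"
  proof (intro sum.cong refl)
    fix x y assume x: "x \<in> {..<a}" and y: "y \<in> {..<b}"
    have k: "x*b+y < a*b" using x y by (simp add: idx_lt)
    show "kron A B $$ (x*b+y, x*b+y) = A $$ (x,x) * B $$ (y,y)" using k y assms by simp
  qed
  also have "\<dots> = mtrace A * mtrace B" using assms by (simp add: mtrace_def sum_product)
  finally show ?thesis .
qed

lemma tp_carrier[simp]: "A \<in> carrier_mat m m \<Longrightarrow> tensor_pow n A \<in> carrier_mat (m^n) (m^n)"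
  by (induction n) auto

lemma tp_mult: assumes "A \<in> carrier_mat m m" "B \<in> carrier_mat m m"
  shows "tensor_pow n (A * B) = tensor_pow n A * tensor_pow n B"
proof (induction n)
  case 0 then show ?case by simp
next
  case (Suc n)
  have "tensor_pow (Suc n) A * tensor_pow (Suc n) B = kron (A*B) (tensor_pow n A * tensor_pow n B)"
    using assms by (simp add: kron_mult[where a=m and b=m and c="m^n" and d="m^n" and e=m and f="m^n"])
  then show ?case using Suc by simp
qed

lemma ct_one: "ct (1\<^sub>m k) = 1\<^sub>m k" by (rule eq_matI) auto

lemma tp_ct: "ct (tensor_pow n A) = tensor_pow n (ct A)"
  by (induction n) (auto simp: ct_kron ct_one)

lemma tp_trace: assumes "A \<in> carrier_mat m m" shows "mtrace (tensor_pow n A) = mtrace A ^ n"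
proof (induction n)
  case 0 then show ?case by (simp add: mtrace_def)
next
  case (Suc n) then show ?case using assms by (simp add: mtrace_kron[where a=m and b="m^n"])
qed

lemma qform_gram:
  assumes A: "A \<in> carrier_mat m d" and v: "v \<in> carrier_vec d"
  shows "qform (ct A * A) v = of_real (\<Sum>k<m. (cmod (\<Sum>j<d. A$$(k,j) * v$j))^2)"
proof -
  have "qform (ct A * A) v = (\<Sum>i<d. \<Sum>j<d. cnj (v$i) * (\<Sum>k<m. cnj (A$$(k,i)) * A$$(k,j)) * v$j)"
    unfolding qform_def using A v by (simp add: scalar_prod_def atLeast0LessThan)
  also have "\<dots> = (\<Sum>i<d. \<Sum>j<d. \<Sum>k<m. cnj (A$$(k,i) * v$i) * (A$$(k,j) * v$j))"
    by (simp add: sum_distrib_left sum_distrib_right algebra_simps)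
  also have "\<dots> = (\<Sum>i<d. \<Sum>k<m. \<Sum>j<d. cnj (A$$(k,i) * v$i) * (A$$(k,j) * v$j))"
    by (simp add: sum.swap[where B="{..<m}"])
  also have "\<dots> = (\<Sum>k<m. \<Sum>i<d. \<Sum>j<d. cnj (A$$(k,i) * v$i) * (A$$(k,j) * v$j))"
    by (rule sum.swap)
  also have "\<dots> = (\<Sum>k<m. cnj (\<Sum>j<d. A$$(k,j) * v$j) * (\<Sum>j<d. A$$(k,j) * v$j))"
    by (simp add: sum_product)
  also have "\<dots> = (\<Sum>k<m. of_real ((cmod (\<Sum>j<d. A$$(k,j) * v$j))^2))"
    by (intro sum.cong refl) (subst complex_norm_square, rule mult.commute)
  finally show ?thesis by simp
qed

lemma psd_gram: assumes A: "A \<in> carrier_mat m d" shows "psd d (ct A * A)"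
  unfolding psd_def using A by (auto simp: qform_gram intro!: sum_nonneg)



definition diagm :: "(nat \<Rightarrow> complex) \<Rightarrow> nat \<Rightarrow> complex mat" where
  "diagm f m = mat m m (\<lambda>(i,j). if i = j then f i else 0)"

lemma diagm_carrier[simp]: "diagm f m \<in> carrier_mat m m" and diagm_dims[simp]: "dim_row (diagm f m) = m" "dim_col (diagm f m) = m"
  by (auto simp: diagm_def)
lemma diagm_index[simp]: "i < m \<Longrightarrow> j < m \<Longrightarrow> diagm f m $$ (i,j) = (if i = j then f i else 0)"
  by (simp add: diagm_def)
lemma diagm_cong: "(\<And>i. i < m \<Longrightarrow> f i = g i) \<Longrightarrow> diagm f m = diagm g m"
  by (rule eq_matI) auto

lemma one_diagm: "1\<^sub>m m = diagm (\<lambda>_. 1) m" by (rule eq_matI) auto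
lemma zero_diagm: "0\<^sub>m m m = diagm (\<lambda>_. 0) m" by (rule eq_matI) auto
lemma smult_diagm: "c \<cdot>\<^sub>m diagm f m = diagm (\<lambda>i. c * f i) m" by (rule eq_matI) auto
lemma add_diagm: "diagm f m + diagm g m = diagm (\<lambda>i. f i + g i) m" by (rule eq_matI) auto

lemma mult_diagm: "diagm f m * diagm g m = diagm (\<lambda>i. f i * g i) m"
proof (rule eq_matI)
  fix i j assume i: "i < dim_row (diagm (\<lambda>i. f i * g i) m)" and j: "j < dim_col (diagm (\<lambda>i. f i * g i) m)"
  then have i': "i < m" and j': "j < m" by auto
  have "(diagm f m * diagm g m) $$ (i,j) = (\<Sum>k\<in>{0..<m}. diagm f m $$ (i,k) * diagm g m $$ (k,j))"
    using i' j' by (simp add: scalar_prod_def)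
  also have "\<dots> = (\<Sum>k\<in>{0..<m}. if k = i then f i * (if i = j then g i else 0) else 0)"
    using i' j' by (intro sum.cong refl) auto
  also have "\<dots> = (if i = j then f i * g i else 0)" using i' by (simp add: sum.delta)
  finally show "(diagm f m * diagm g m) $$ (i,j) = diagm (\<lambda>i. f i * g i) m $$ (i,j)" using i' j' by simp
qed auto

lemma pow_diagm: "diagm f m ^\<^sub>m k = diagm (\<lambda>i. f i ^ k) m"
  by (induction k) (auto simp: one_diagm mult_diagm)

lemma exp_series_complex: "(\<Sum>k. (x::complex) ^ k / of_nat (fact k)) = exp x"
proof -
  have "(\<lambda>k. x ^ k /\<^sub>R fact k) sums exp x" by (rule exp_converges)
  moreover have "(\<lambda>k. x ^ k /\<^sub>R fact k) = (\<lambda>k. x ^ k / of_nat (fact k))"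
    by (auto simp: scaleR_conv_of_real divide_inverse mult.commute)
  ultimately show ?thesis by (simp add: sums_iff)
qed

lemma exp_series_complex': "(\<Sum>k. (x::complex) ^ k / fact k) = exp x"
  using exp_series_complex by simp

lemma mat_exp_diagm: "mat_exp (diagm f m) = diagm (\<lambda>i. exp (f i)) m"
proof (rule eq_matI)
  fix i j assume "i < dim_row (diagm (\<lambda>i. exp (f i)) m)" "j < dim_col (diagm (\<lambda>i. exp (f i)) m)"
  then have i: "i < m" and j: "j < m" by auto
  show "mat_exp (diagm f m) $$ (i,j) = diagm (\<lambda>i. exp (f i)) m $$ (i,j)"
    using i j by (auto simp: mat_exp_def pow_diagm exp_series_complex')
qed (auto simp: mat_exp_def)

lemma divmod_eq_iff: "(q::nat) > 0 \<Longrightarrow> (i div q = j div q \<and> i mod q = j mod q) = (i = j)"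
  by (metis div_mult_mod_eq)

lemma kron_diagm: assumes "q > 0"
  shows "kron (diagm f p) (diagm g q) = diagm (\<lambda>i. f (i div q) * g (i mod q)) (p*q)"
proof (rule eq_matI)
  fix i j assume "i < dim_row (diagm (\<lambda>i. f (i div q) * g (i mod q)) (p*q))" "j < dim_col (diagm (\<lambda>i. f (i div q) * g (i mod q)) (p*q))"
  then have i: "i < p*q" and j: "j < p*q" by auto
  have b: "i div q < p" "j div q < p" "i mod q < q" "j mod q < q" using i j assms
    by (auto simp: less_mult_imp_div_less)
  show "kron (diagm f p) (diagm g q) $$ (i,j) = diagm (\<lambda>i. f (i div q) * g (i mod q)) (p*q) $$ (i,j)"
    using i j b assms divmod_eq_iff[OF assms, of i j] by auto
qed auto

lemma aux_divq: "s < (b::nat) \<Longrightarrow> (b * q + s) div b = q"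
  by simp
lemma aux_sucadd: "m < (n::nat) \<Longrightarrow> \<exists>r. n = m + Suc r"
  by (drule less_imp_Suc_add) simp

lemma bit_mod: "m < n \<Longrightarrow> ((i::nat) mod 2^n) div 2^m mod 2 = i div 2^m mod 2"
proof -
  assume "m < n"
  then obtain r where n: "n = m + Suc r" using aux_sucadd by blast
  have e1: "(i::nat) mod (2^m * 2^Suc r) = 2^m * (i div 2^m mod 2^Suc r) + i mod 2^m"
    by (rule mod_mult2_eq)
  have e2: "(2^m * (i div 2^m mod 2^Suc r) + i mod 2^m) div 2^m = i div 2^m mod (2^Suc r::nat)"
    by (rule aux_divq) simp
  have e3: "(i div 2^m mod 2^Suc r) mod 2 = i div 2^m mod (2::nat)"
    by (rule mod_mod_cancel) simp
  show ?thesis unfolding n power_add e1 e2 e3 ..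
qed

lemma tp_diagm: "tensor_pow n (diagm e 2) = diagm (\<lambda>i. \<Prod>k\<in>{1..n}. e (i div 2^(n-k) mod 2)) (2^n)"
proof (induction n)
  case 0 then show ?case by (simp add: one_diagm)
next
  case (Suc n)
  have "tensor_pow (Suc n) (diagm e 2) = diagm (\<lambda>i. e (i div 2^n) * (\<Prod>k\<in>{1..n}. e ((i mod 2^n) div 2^(n-k) mod 2))) (2*2^n)"
    using Suc by (simp add: kron_diagm)
  also have "\<dots> = diagm (\<lambda>i. \<Prod>k\<in>{1..Suc n}. e (i div 2^(Suc n-k) mod 2)) (2*2^n)"
  proof (rule diagm_cong)
    fix i :: nat assume i: "i < 2*2^n"
    have "i div 2^n < 2" using i by (simp add: less_mult_imp_div_less mult.commute)
    then have h1: "i div 2^n mod 2 = i div 2^n" by simp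
    have "(\<Prod>k\<in>{1..Suc n}. e (i div 2^(Suc n-k) mod 2)) = e (i div 2^n mod 2) * (\<Prod>k\<in>{Suc 1..Suc n}. e (i div 2^(Suc n-k) mod 2))"
      by (simp add: prod.atLeast_Suc_atMost)
    also have "(\<Prod>k\<in>{Suc 1..Suc n}. e (i div 2^(Suc n-k) mod 2)) = (\<Prod>k\<in>{1..n}. e (i div 2^(n-k) mod 2))"
      by (simp only: prod.shift_bounds_cl_Suc_ivl) simp
    also have "\<dots> = (\<Prod>k\<in>{1..n}. e ((i mod 2^n) div 2^(n-k) mod 2))"
      by (intro prod.cong refl) (simp add: bit_mod)
    finally show "e (i div 2^n) * (\<Prod>k\<in>{1..n}. e ((i mod 2^n) div 2^(n-k) mod 2)) = (\<Prod>k\<in>{1..Suc n}. e (i div 2^(Suc n-k) mod 2))"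
      using h1 by simp
  qed
  finally show ?case by (simp only: power_Suc)
qed

lemma tp_one: "tensor_pow n (1\<^sub>m 2) = diagm (\<lambda>_. 1) (2^n)"
  using tp_diagm[of n "\<lambda>_. 1"] by (simp add: one_diagm)

lemma local_diagm: assumes "1 \<le> k" "k \<le> n"
  shows "local_ham (diagm h 2) n k = diagm (\<lambda>i. h (i div 2^(n-k) mod 2)) (2^n)"
proof -
  have e: "2^(k - Suc 0)*2*2^(n-k) = (2::nat)^n"
    using assms by (simp flip: power_add power_Suc2) 
  show ?thesis unfolding local_ham_def tp_one
    by (simp add: kron_diagm e)
qed

lemma foldr_diagm: "(\<And>x. x \<in> set xs \<Longrightarrow> g x = diagm (f x) m) \<Longrightarrow>
  foldr (\<lambda>x M. g x + M) xs (0\<^sub>m m m) = diagm (\<lambda>i. \<Sum>x\<leftarrow>xs. f x i) m"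
  by (induction xs) (auto simp: zero_diagm add_diagm)

lemma total_diagm: "total_ham (diagm h 2) n = diagm (\<lambda>i. \<Sum>k\<in>{1..n}. h (i div 2^(n-k) mod 2)) (2^n)"
proof -
  have "total_ham (diagm h 2) n = diagm (\<lambda>i. \<Sum>k\<leftarrow>[1..<Suc n]. h (i div 2^(n-k) mod 2)) (2^n)"
    unfolding total_ham_def by (rule foldr_diagm) (auto intro!: local_diagm)
  then show ?thesis by (simp only: sum_list_distinct_conv_sum_set[OF distinct_upt] set_upt atLeastLessThanSuc_atLeastAtMost)
qed

definition hq :: "real \<Rightarrow> nat \<Rightarrow> complex" where
  "hq \<tau> b = of_real (pi / \<tau>) * (if b = 0 then 1 else -1)"

definition ud :: "real \<Rightarrow> real \<Rightarrow> complex mat" where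
  "ud \<tau> t = diagm (\<lambda>b. exp (- \<i> * of_real t * hq \<tau> b)) 2"

lemma qubit_ham_diagm: "qubit_ham \<tau> = diagm (hq \<tau>) 2"
  unfolding qubit_ham_def hq_def by (rule eq_matI) (auto simp: sigma_z_def)

lemma evol_qubit: "evol (qubit_ham \<tau>) t = ud \<tau> t"
  unfolding evol_def ud_def qubit_ham_diagm by (simp only: smult_diagm mat_exp_diagm)

lemma evol_total: "evol (total_ham (qubit_ham \<tau>) n) t = tensor_pow n (ud \<tau> t)"
proof -
  have "evol (total_ham (qubit_ham \<tau>) n) t = diagm (\<lambda>i. exp ((- \<i> * of_real t) * (\<Sum>k\<in>{1..n}. hq \<tau> (i div 2^(n-k) mod 2)))) (2^n)"
    unfolding evol_def qubit_ham_diagm total_diagm by (simp only: smult_diagm mat_exp_diagm)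
  also have "\<dots> = diagm (\<lambda>i. \<Prod>k\<in>{1..n}. exp (- \<i> * of_real t * hq \<tau> (i div 2^(n-k) mod 2))) (2^n)"
    by (simp only: sum_distrib_left exp_sum finite_atLeastAtMost)
  also have "\<dots> = tensor_pow n (ud \<tau> t)" unfolding ud_def tp_diagm ..
  finally show ?thesis .
qed



lemma sum2: "(\<Sum>k\<in>{0..<2::nat}. f k) = f 0 + f 1" "(\<Sum>k<2::nat. f k) = f 0 + f 1"
  by (simp_all add: numeral_2_eq_2 atLeast0LessThan lessThan_Suc add.commute)
lemma less2: "(i::nat) < 2 \<longleftrightarrow> i = 0 \<or> i = 1" by auto

lemma mat2_eqI: assumes "A \<in> carrier_mat 2 2" "B \<in> carrier_mat 2 2"
  "A $$ (0,0) = B $$ (0,0)" "A $$ (0,1) = B $$ (0,1)" "A $$ (1,0) = B $$ (1,0)" "A $$ (1,1) = B $$ (1,1)"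
  shows "A = B"
  using assms by (intro eq_matI) (auto simp: less2)

lemma mult2_index: assumes "A \<in> carrier_mat 2 2" "B \<in> carrier_mat 2 2" "i < 2" "j < 2"
  shows "(A * B) $$ (i,j) = A $$ (i,0) * B $$ (0,j) + A $$ (i,1) * B $$ (1,j)"
  using assms by (simp add: scalar_prod_def sum2)

lemma mult2_idx: assumes "A \<in> carrier_mat 2 2" "B \<in> carrier_mat 2 2"
  shows "(A * B) $$ (0,0) = A $$ (0,0) * B $$ (0,0) + A $$ (0,Suc 0) * B $$ (Suc 0,0)"
    "(A * B) $$ (0,Suc 0) = A $$ (0,0) * B $$ (0,Suc 0) + A $$ (0,Suc 0) * B $$ (Suc 0,Suc 0)"
    "(A * B) $$ (Suc 0,0) = A $$ (Suc 0,0) * B $$ (0,0) + A $$ (Suc 0,Suc 0) * B $$ (Suc 0,0)"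
    "(A * B) $$ (Suc 0,Suc 0) = A $$ (Suc 0,0) * B $$ (0,Suc 0) + A $$ (Suc 0,Suc 0) * B $$ (Suc 0,Suc 0)"
  using mult2_index[OF assms] by auto

lemma ct2_idx: assumes "A \<in> carrier_mat 2 2"
  shows "ct A $$ (0,0) = cnj (A $$ (0,0))" "ct A $$ (0,Suc 0) = cnj (A $$ (Suc 0,0))"
    "ct A $$ (Suc 0,0) = cnj (A $$ (0,Suc 0))" "ct A $$ (Suc 0,Suc 0) = cnj (A $$ (Suc 0,Suc 0))"
  using assms by auto

lemma mtrace2: "A \<in> carrier_mat 2 2 \<Longrightarrow> mtrace A = A $$ (0,0) + A $$ (Suc 0,Suc 0)"
  by (simp add: mtrace_def sum2)

definition ra :: complex where "ra = of_real (1 / sqrt 2)"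
definition rb :: "real \<Rightarrow> complex" where "rb l = of_real (l / sqrt 2)"
definition re :: "real \<Rightarrow> complex" where "re l = of_real (sqrt (1 - l^2) / sqrt 2)"

definition Rm :: "real \<Rightarrow> complex mat" where
  "Rm l = mat 2 2 (\<lambda>(i,j). if i = 0 then (if j = 0 then ra else rb l) else (if j = 0 then 0 else re l))"

definition qmat :: "real \<Rightarrow> complex mat \<Rightarrow> complex mat" where
  "qmat l S = mat 2 2 (\<lambda>(i,j). if i = 0 then S $$ (0,j) / ra else (S $$ (1,j) - rb l * S $$ (0,j) / ra) / re l)"

lemma Rm_carrier[simp]: "Rm l \<in> carrier_mat 2 2" by (simp add: Rm_def)
lemma qmat_carrier[simp]: "qmat l S \<in> carrier_mat 2 2" by (simp add: qmat_def)

lemma Rm_dims[simp]: "dim_row (Rm l) = 2" "dim_col (Rm l) = 2" by (auto simp: Rm_def)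
lemma Rm_index[simp]: "Rm l $$ (0,0) = ra" "Rm l $$ (0,1) = rb l" "Rm l $$ (1,0) = 0" "Rm l $$ (1,1) = re l"
  by (auto simp: Rm_def)
lemma Rm_index'[simp]: "Rm l $$ (0,Suc 0) = rb l" "Rm l $$ (Suc 0,0) = 0" "Rm l $$ (Suc 0,Suc 0) = re l"
  by (auto simp: Rm_def)
lemma qmat_dims[simp]: "dim_row (qmat l S) = 2" "dim_col (qmat l S) = 2" by (auto simp: qmat_def)
lemma qmat_index[simp]: "j < 2 \<Longrightarrow> qmat l S $$ (0,j) = S $$ (0,j) / ra"
  "j < 2 \<Longrightarrow> qmat l S $$ (1,j) = (S $$ (1,j) - rb l * S $$ (0,j) / ra) / re l"
  "j < 2 \<Longrightarrow> qmat l S $$ (Suc 0,j) = (S $$ (Suc 0,j) - rb l * S $$ (0,j) / ra) / re l"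
  by (auto simp: qmat_def)
lemma ctRm_carrier[simp]: "ct (Rm l) \<in> carrier_mat 2 2" by simp
lemma ctRm_mult_carrier[simp]: "B \<in> carrier_mat 2 2 \<Longrightarrow> ct (Rm l) * B \<in> carrier_mat 2 2"
  by (rule mult_carrier_mat) auto
lemma cnj_ra[simp]: "cnj ra = ra" by (simp add: ra_def)
lemma cnj_rb[simp]: "cnj (rb l) = rb l" by (simp add: rb_def)
lemma cnj_re[simp]: "cnj (re l) = re l" by (simp add: re_def)

lemma rho_explicit: "rho l = mat 2 2 (\<lambda>(i,j). if i = j then 1/2 else of_real l / 2)"
proof (rule mat2_eqI)
  have s: "complex_of_real (1 / sqrt 2) * complex_of_real (1 / sqrt 2) = 1/2"
    by (simp flip: of_real_mult)
  have s2: "complex_of_real (sqrt 2) * complex_of_real (sqrt 2) = 2"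
    by (simp flip: of_real_mult)
  show "rho l $$ (0,0) = mat 2 2 (\<lambda>(i,j). if i = j then 1/2 else of_real l / 2) $$ (0,0)"
    by (simp add: rho_def proj_Phi_def Phi_def s s2 field_simps)
  show "rho l $$ (1,1) = mat 2 2 (\<lambda>(i,j). if i = j then 1/2 else of_real l / 2) $$ (1,1)"
    by (simp add: rho_def proj_Phi_def Phi_def s s2 field_simps)
  show "rho l $$ (0,1) = mat 2 2 (\<lambda>(i,j). if i = j then 1/2 else of_real l / 2) $$ (0,1)"
    by (simp add: rho_def proj_Phi_def Phi_def s s2 field_simps)
  show "rho l $$ (1,0) = mat 2 2 (\<lambda>(i,j). if i = j then 1/2 else of_real l / 2) $$ (1,0)"
    by (simp add: rho_def proj_Phi_def Phi_def s s2 field_simps)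
qed (auto simp: rho_def proj_Phi_def)

lemma rho_carrier[simp]: "rho l \<in> carrier_mat 2 2" by (simp add: rho_explicit)

lemma ra_sq: "ra * ra = 1/2" by (simp add: ra_def flip: of_real_mult)
lemma ra_nz: "ra \<noteq> 0" by (simp add: ra_def)
lemma re_nz: "0 < l \<Longrightarrow> l < 1 \<Longrightarrow> re l \<noteq> 0"
proof -
  assume a: "0 < l" "l < 1"
  then have "l^2 < 1" by (simp add: power_less_one_iff)
  then show ?thesis by (simp add: re_def)
qed

lemma ctR_R: assumes "0 < l" "l < 1" shows "ct (Rm l) * Rm l = rho l"
proof -
  have h1: "ra * rb l = of_real l / 2"
    by (simp add: ra_def rb_def flip: of_real_mult)
  have h2: "rb l * rb l + re l * re l = 1/2"
  proof -
    have "sqrt (1 - l^2)^2 = 1 - l^2" using assms by (simp add: power_le_one)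
    then have "(l / sqrt 2) * (l / sqrt 2) + (sqrt (1 - l^2) / sqrt 2) * (sqrt (1 - l^2) / sqrt 2) = 1/2"
      by (simp add: field_simps power2_eq_square)
    then show ?thesis unfolding rb_def re_def by (simp flip: of_real_mult of_real_add)
  qed
  show ?thesis
    by (rule mat2_eqI) (auto simp del: index_mult_mat simp: mult_carrier_mat mult2_index[OF ct_carrier[OF Rm_carrier] Rm_carrier] rho_explicit ra_sq h1 h2 mult.commute)
qed

lemma ctR_q: assumes "0 < l" "l < 1" "S \<in> carrier_mat 2 2" shows "ct (Rm l) * qmat l S = S"
  using assms ra_nz re_nz[OF assms(1,2)]
  by (intro mat2_eqI) (auto simp del: index_mult_mat simp: mult_carrier_mat mult2_index[OF ct_carrier[OF Rm_carrier] qmat_carrier] field_simps)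

definition rhot :: "real \<Rightarrow> complex \<Rightarrow> complex mat" where
  "rhot l z = mat 2 2 (\<lambda>(i,j). if i = j then 1/2 else if i = 0 then z * of_real l / 2 else cnj z * of_real l / 2)"

lemma rhot_carrier[simp]: "rhot l z \<in> carrier_mat 2 2" by (simp add: rhot_def)
lemma rhot_index[simp]: "rhot l z $$ (0,0) = 1/2" "rhot l z $$ (0,Suc 0) = z * of_real l / 2"
  "rhot l z $$ (Suc 0,0) = cnj z * of_real l / 2" "rhot l z $$ (Suc 0,Suc 0) = 1/2"
  by (auto simp: rhot_def)

lemma rb_ra: "rb l = of_real l * ra" by (simp add: rb_def ra_def flip: of_real_mult)
lemma re_sq: "0 < l \<Longrightarrow> l < 1 \<Longrightarrow> re l * re l = (1 - of_real l ^ 2) / 2"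
proof -
  assume "0 < l" "l < 1"
  then have "sqrt (1 - l^2)^2 = 1 - l^2" by (simp add: power_le_one)
  then have "(sqrt (1 - l^2) / sqrt 2) * (sqrt (1 - l^2) / sqrt 2) = (1 - l^2)/2"
    by (simp add: power2_eq_square)
  then show ?thesis unfolding re_def by (metis of_real_mult of_real_divide of_real_diff of_real_1 of_real_power of_real_numeral)
qed

lemma trace_q: assumes l: "0 < l" "l < 1" and z: "z * cnj z = 1"
  shows "mtrace (ct (qmat l (rhot l z)) * qmat l (rhot l z)) = 1 + of_real l ^ 2 / (1 - of_real l ^ 2) * ((z - 1) * cnj (z - 1))"
proof -
  let ?q = "qmat l (rhot l z)"
  define L where "L = complex_of_real l"
  have cL: "cnj L = L" by (simp add: L_def)
  have L1: "1 - L^2 \<noteq> 0"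
  proof
    assume "1 - L^2 = 0"
    then have "l^2 = 1" unfolding L_def by (metis eq_iff_diff_eq_0 of_real_eq_1_iff of_real_power)
    moreover have "l^2 < 1" using l by (simp add: power_less_one_iff)
    ultimately show False by simp
  qed
  have rn: "ra \<noteq> 0" "re l \<noteq> 0" using ra_nz re_nz[OF l] by auto
  have q00: "?q $$ (0,0) = 1 / (2*ra)" by simp
  have q01: "?q $$ (0,Suc 0) = z * L / (2*ra)" by (simp add: L_def)
  have q10: "?q $$ (Suc 0,0) = L * (cnj z - 1) / (2 * re l)"
    using rn by (simp add: rb_ra L_def field_simps)
  have q11: "?q $$ (Suc 0,Suc 0) = (1 - L^2 * z) / (2 * re l)"
    using rn by (simp add: rb_ra L_def field_simps power2_eq_square)
  have "mtrace (ct ?q * ?q) = cnj (?q $$ (0,0)) * ?q $$ (0,0) + cnj (?q $$ (Suc 0,0)) * ?q $$ (Suc 0,0)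
      + (cnj (?q $$ (0,Suc 0)) * ?q $$ (0,Suc 0) + cnj (?q $$ (Suc 0,Suc 0)) * ?q $$ (Suc 0,Suc 0))"
    by (simp only: mtrace2[OF mult_carrier_mat[OF ct_carrier[OF qmat_carrier] qmat_carrier]]
        mult2_idx[OF ct_carrier[OF qmat_carrier] qmat_carrier] ct2_idx[OF qmat_carrier] add.assoc)
  also have "\<dots> = 1/(4*(ra*ra)) + L^2 * (z * cnj z) / (4*(ra*ra)) + L^2 * (z - 1) * (cnj z - 1) / (4 * (re l * re l))
     + (1 - L^2 * z) * (1 - L^2 * cnj z) / (4 * (re l * re l))"
    unfolding q00 q01 q10 q11 using rn by (simp add: cL field_simps power2_eq_square)
  also have "\<dots> = 1/(4*(1/2)) + L^2 * 1 / (4*(1/2)) + L^2 * (z - 1) * (cnj z - 1) / (4 * ((1 - L^2)/2))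
     + (1 - L^2 * z) * (1 - L^2 * cnj z) / (4 * ((1 - L^2)/2))"
    using re_sq[OF l] by (simp only: ra_sq z L_def)
  also have "\<dots> = 1/2 + L^2/2 + (L^2 * (z - 1) * (cnj z - 1) + (1 - L^2 * z) * (1 - L^2 * cnj z)) / (2 * (1 - L^2))"
  proof -
    have e4: "4*((1-L^2)/2) = 2*(1-L^2)" "4*(1/2::complex) = 2" by simp_all
    show ?thesis by (simp only: e4 mult_1_right add_divide_distrib add.assoc)
  qed
  also have "\<dots> = 1 + L ^ 2 / (1 - L ^ 2) * ((z - 1) * cnj (z - 1))"
  proof -
    have "(L^2 * (z - 1) * (cnj z - 1) + (1 - L^2 * z) * (1 - L^2 * cnj z)) = (1 + L^2)^2 - 2 * L^2 * (z + cnj z)"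
    proof -
      have "L^2 * (z - 1) * (cnj z - 1) + (1 - L^2 * z) * (1 - L^2 * cnj z) = (1 + L^2)^2 - 2 * L^2 * (z + cnj z) + (L^2 + L^2*L^2) * (z * cnj z - 1)"
        by (simp add: algebra_simps power2_eq_square)
      then show ?thesis using z by simp
    qed
    moreover have "(z - 1) * cnj (z - 1) = 2 - (z + cnj z)" using z by (simp add: algebra_simps)
    ultimately have "1/2 + L^2/2 + (L^2 * (z - 1) * (cnj z - 1) + (1 - L^2 * z) * (1 - L^2 * cnj z)) / (2 * (1 - L^2))
       = 1/2 + L^2/2 + ((1 + L^2)^2 - 2 * L^2 * (z + cnj z)) / (2 * (1 - L^2))" by simp
    also have "\<dots> = 1 + L ^ 2 / (1 - L ^ 2) * (2 - (z + cnj z))"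
      using L1 by (simp add: field_simps) (simp add: algebra_simps eval_nat_numeral)
    finally show ?thesis using \<open>(z - 1) * cnj (z - 1) = 2 - (z + cnj z)\<close> by simp
  qed
  finally show ?thesis unfolding L_def .
qed



lemma key4:
  fixes p c C d w W Z00 Z01 Z10 Z11 :: complex and r :: real
  assumes cc: "cnj c = C" and cw: "cnj w = W" and cp: "cnj p = p" and dp: "d = 1 - p"
  defines "R \<equiv> complex_of_real r"
  shows "qform (mat 4 4 (\<lambda>(i,j). [[p,c,p,c+w],[C,d,C+W,d],[p,c+w,Z00,Z01],[C+W,d,Z10,Z11]] ! i ! j))
             (vec 4 (\<lambda>i. [-(1 - R*c*W), -R*p*W, 1, 0] ! i))
       + qform (mat 4 4 (\<lambda>(i,j). [[p,c,p,c+w],[C,d,C+W,d],[p,c+w,Z00,Z01],[C+W,d,Z10,Z11]] ! i ! j))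
             (vec 4 (\<lambda>i. [-R*d*w, -(1 - R*C*w), 0, 1] ! i))
       = Z00 + Z11 - 1 - 2*R*w*W + R^2*(p*d - c*C)*w*W"
proof -
  have cC: "cnj C = c" using cc by auto
  have cW: "cnj W = w" using cw by auto
  have cR: "cnj R = R" by (simp add: R_def)
  have cd: "cnj d = d" using cp dp by simp
  have four: "(4::nat) = Suc (Suc (Suc (Suc 0)))" by simp
  show ?thesis
    unfolding qform_def four
    by (simp add: lessThan_Suc cc cw cC cW cR cd cp) (simp add: dp algebra_simps power2_eq_square)
qed

lemma ct_ct: "ct (ct A) = A" by (rule eq_matI) auto

definition stackN :: "nat \<Rightarrow> complex mat \<Rightarrow> complex mat \<Rightarrow> complex mat" where
  "stackN d R Q = mat d (2*d) (\<lambda>(i,j). if j < d then R $$ (i,j) else Q $$ (i, j - d))"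

definition blk :: "complex mat \<Rightarrow> complex mat \<Rightarrow> nat \<Rightarrow> complex mat" where
  "blk R Q p = (if p = 0 then R else Q)"

lemma stackN_carrier[simp]: "stackN d R Q \<in> carrier_mat d (2*d)" by (simp add: stackN_def)
lemma stackN_dims[simp]: "dim_row (stackN d R Q) = d" "dim_col (stackN d R Q) = 2*d" by (simp_all add: stackN_def)

lemma stack_block:
  assumes R: "R \<in> carrier_mat d d" and Q: "Q \<in> carrier_mat d d" and p: "p < 2" and q: "q < 2"
  shows "mat d d (\<lambda>(a,b). (ct (stackN d R Q) * stackN d R Q) $$ (p*d+a, q*d+b)) = ct (blk R Q p) * blk R Q q"
proof (rule eq_matI)
  have bc: "blk R Q x \<in> carrier_mat d d" for x using R Q by (simp add: blk_def)
  have bd[simp]: "dim_row (blk R Q x) = d" "dim_col (blk R Q x) = d" for x using bc[of x] by auto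
  fix a b assume a: "a < dim_row (ct (blk R Q p) * blk R Q q)" and b: "b < dim_col (ct (blk R Q p) * blk R Q q)"
  then have a': "a < d" and b': "b < d" using bc[of p] bc[of q] by auto
  have pa: "p*d+a < 2*d" using p a' by (cases p) auto
  have qb: "q*d+b < 2*d" using q b' by (cases q) auto
  have N: "stackN d R Q $$ (k, x*d+y) = blk R Q x $$ (k,y)" if "k < d" "x < 2" "y < d" for k x y
    using that by (cases x) (auto simp: stackN_def blk_def)
  have "(ct (stackN d R Q) * stackN d R Q) $$ (p*d+a, q*d+b) = (\<Sum>k\<in>{0..<d}. cnj (stackN d R Q $$ (k, p*d+a)) * stackN d R Q $$ (k, q*d+b))"
    using pa qb by (simp add: scalar_prod_def)
  also have "\<dots> = (\<Sum>k\<in>{0..<d}. cnj (blk R Q p $$ (k,a)) * blk R Q q $$ (k,b))"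
    using N p q a' b' by (intro sum.cong refl) auto
  also have "\<dots> = (ct (blk R Q p) * blk R Q q) $$ (a,b)"
    using bc a' b' by (simp add: scalar_prod_def)
  finally show "mat d d (\<lambda>(a,b). (ct (stackN d R Q) * stackN d R Q) $$ (p*d+a, q*d+b)) $$ (a,b) = (ct (blk R Q p) * blk R Q q) $$ (a,b)"
    using a' b' by simp
qed (use R Q in \<open>auto simp: blk_def\<close>)

lemma ampl_stack:
  assumes R: "R \<in> carrier_mat d d" and Q: "Q \<in> carrier_mat d d"
  shows "ampliate 2 d 2 E (ct (stackN d R Q) * stackN d R Q)
     = mat 4 4 (\<lambda>(i,j). E (ct (blk R Q (i div 2)) * blk R Q (j div 2)) $$ (i mod 2, j mod 2))"
proof (rule eq_matI)
  fix i j assume "i < dim_row (mat 4 4 (\<lambda>(i,j). E (ct (blk R Q (i div 2)) * blk R Q (j div 2)) $$ (i mod 2, j mod 2)))"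
    "j < dim_col (mat 4 4 (\<lambda>(i,j). E (ct (blk R Q (i div 2)) * blk R Q (j div 2)) $$ (i mod 2, j mod 2)))"
  then have i: "i < 4" and j: "j < 4" by auto
  then have "i div 2 < 2" "j div 2 < 2" by auto
  then show "ampliate 2 d 2 E (ct (stackN d R Q) * stackN d R Q) $$ (i,j) = mat 4 4 (\<lambda>(i,j). E (ct (blk R Q (i div 2)) * blk R Q (j div 2)) $$ (i mod 2, j mod 2)) $$ (i,j)"
    using i j stack_block[OF R Q] by (simp add: ampliate_def)
qed (auto simp: ampliate_def)

lemma pow_bound: "(y::real) \<ge> 0 \<Longrightarrow> (1+y)^n - 1 \<le> real n * y * (1+y)^n"
proof (induction n)
  case 0 then show ?case by simp
next
  case (Suc n)
  have "(1+y)^Suc n - 1 = (1+y)*((1+y)^n - 1) + y" by (simp add: algebra_simps)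
  also have "\<dots> \<le> (1+y) * (real n * y * (1+y)^n) + y"
    using Suc by (intro add_right_mono mult_left_mono) auto
  also have "\<dots> \<le> real n * y * (1+y)^Suc n + y * (1+y)^Suc n"
  proof -
    have "y \<le> y * (1+y)^Suc n" using Suc.prems
      by (simp add: mult_le_cancel_left1 one_le_power del: power_Suc)
    then show ?thesis by (simp add: algebra_simps)
  qed
  also have "\<dots> = real (Suc n) * y * (1+y)^Suc n" by (simp add: algebra_simps)
  finally show ?case .
qed

lemma final_real:
  fixes NK c2 dt x :: real
  assumes NK: "NK > 0" and H: "\<And>r. NK \<ge> c2 * (2*r - r^2 * dt)" and dt: "dt \<le> 1/4 - x^2" and c2: "c2 \<ge> x^2"
  shows "1/2 - x \<ge> 1 / (4*NK + 4)"
proof -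
  define q where "q = 1/4 - x^2"
  have qpos: "q > 0"
  proof (rule ccontr)
    assume "\<not> q > 0"
    then have q0: "q \<le> 0" by simp
    then have c2p: "c2 \<ge> 1/4" using c2 by (simp add: q_def)
    define r where "r = (NK + 1) / (2*c2)"
    have rp: "r \<ge> 0" using NK c2p by (simp add: r_def)
    have "r^2 * dt \<le> 0" using dt q0 unfolding q_def by (simp add: mult_nonneg_nonpos)
    then have "c2 * (2*r - r^2*dt) \<ge> c2 * (2*r)" using c2p by (intro mult_left_mono) auto
    also have "c2 * (2*r) = NK + 1" using c2p by (simp add: r_def)
    finally show False using H[of r] by simp
  qed
  define r where "r = 1/q"
  have "r^2 * dt \<le> r^2 * q" using dt by (simp add: q_def mult_left_mono)
  then have "2*r - r^2*dt \<ge> r" using qpos by (simp add: r_def power2_eq_square field_simps)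
  moreover have "r > 0" using qpos by (simp add: r_def)
  moreover have "c2 \<ge> 0" by (meson c2 order_trans zero_le_power2)
  ultimately have "c2 * (2*r - r^2*dt) \<ge> x^2 * r" using c2
    by (intro mult_mono) auto
  then have "NK \<ge> x^2 / q" using H[of r] by (simp add: r_def)
  then have A: "NK * q \<ge> x^2" using qpos by (simp add: field_simps)
  define e where "e = 1/2 - x"
  have q_e: "q = e * (1 - e)" by (simp add: q_def e_def algebra_simps power2_eq_square)
  have xx: "x^2 < (1/2)^2" using qpos unfolding q_def by (simp add: power_divide)
  then have "\<bar>x\<bar> < 1/2" using power2_less_imp_less[of "\<bar>x\<bar>" "1/2"] by simp
  then have e0: "e > 0" and e1: "e < 1" by (auto simp: e_def)
  have qe2: "q = e - e*e" using q_e by (simp add: algebra_simps)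
  have "0 \<le> e*e" by simp
  then have "q \<le> e" using qe2 by linarith
  then have "NK * e \<ge> NK * q" using NK by (simp add: mult_left_mono)
  moreover have "x^2 \<ge> 1/4 - e"
  proof -
    have h: "0 \<le> (x - 1/2) * (x - 1/2)" by simp
    have "(x - 1/2) * (x - 1/2) = x*x - x + 1/4" by (simp add: algebra_simps)
    then show ?thesis using h unfolding e_def power2_eq_square by linarith
  qed
  ultimately have "NK * e \<ge> 1/4 - e" using A by linarith
  then have "e * (4*NK + 4) \<ge> 1" by (simp add: algebra_simps)
  then show ?thesis using NK unfolding e_def[symmetric] by (simp add: field_simps)
qed



lemma ud_expl: "ud \<tau> t = diagm (\<lambda>b. if b = 0 then cis (- t*pi/\<tau>) else cis (t*pi/\<tau>)) 2"
  unfolding ud_def hq_def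
proof (rule diagm_cong)
  fix b :: nat assume "b < 2"
  have e1: "- \<i> * complex_of_real t * (complex_of_real (pi / \<tau>) * 1) = \<i> * complex_of_real (- t*pi/\<tau>)" by simp
  have e2: "- \<i> * complex_of_real t * (complex_of_real (pi / \<tau>) * -1) = \<i> * complex_of_real (t*pi/\<tau>)" by simp
  show "exp (- \<i> * complex_of_real t * (complex_of_real (pi / \<tau>) * (if b = 0 then 1 else - 1))) =
        (if b = 0 then cis (- t * pi / \<tau>) else cis (t * pi / \<tau>))"
    by (cases "b = 0") (simp_all only: if_True if_False e1 e2 cis_conv_exp, simp_all add: algebra_simps)
qed

lemma diag2_idx[simp]: "diagm f 2 $$ (0,0) = f 0" "diagm f 2 $$ (0,Suc 0) = 0" "diagm f 2 $$ (Suc 0,0) = 0"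
  "diagm f 2 $$ (Suc 0,Suc 0) = f (Suc 0)"
  by auto

lemma conj_rho: "ud \<tau> t * rho l * ud \<tau> (-t) = rhot l (cis (2 * (- t*pi/\<tau>)))"
proof -
  define x where "x = - t*pi/\<tau>"
  have u1: "ud \<tau> t = diagm (\<lambda>b. if b = 0 then cis x else cis (-x)) 2"
    unfolding ud_expl by (rule diagm_cong) (simp add: x_def)
  have u2: "ud \<tau> (-t) = diagm (\<lambda>b. if b = 0 then cis (-x) else cis x) 2"
    unfolding ud_expl by (rule diagm_cong) (simp add: x_def)
  have rr[simp]: "rho l $$ (0,0) = 1/2" "rho l $$ (0,Suc 0) = of_real l / 2" "rho l $$ (Suc 0,0) = of_real l / 2"
     "rho l $$ (Suc 0,Suc 0) = 1/2" by (auto simp: rho_explicit)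
  have c1: "cis x * cis (-x) = 1" "cis (-x) * cis x = 1" by (simp_all add: cis_mult)
  have c2: "cis x * cis x = cis (2*x)" "cis (-x) * cis (-x) = cnj (cis (2*x))" by (simp_all add: cis_mult cis_cnj)
  let ?U1 = "diagm (\<lambda>b. if b = 0 then cis x else cis (-x)) 2"
  let ?U2 = "diagm (\<lambda>b. if b = 0 then cis (-x) else cis x) 2"
  have cA: "?U1 * rho l \<in> carrier_mat 2 2" by (rule mult_carrier_mat) auto
  show ?thesis unfolding u1 u2 x_def[symmetric]
    by (rule mat2_eqI) (auto simp del: index_mult_mat simp: mult2_idx[OF cA diagm_carrier] mult2_idx[OF diagm_carrier rho_carrier]
       mult_carrier_mat[OF cA diagm_carrier] c1 c2 algebra_simps)
qed

lemma conj_omega: assumes "W \<in> carrier_mat 2 2"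
  shows "(ud \<tau> t * W * ud \<tau> (-t)) $$ (0,0) = W $$ (0,0)"
    "(ud \<tau> t * W * ud \<tau> (-t)) $$ (0,Suc 0) = cis (2 * (- t*pi/\<tau>)) * W $$ (0,Suc 0)"
    "(ud \<tau> t * W * ud \<tau> (-t)) $$ (Suc 0,0) = cnj (cis (2 * (- t*pi/\<tau>))) * W $$ (Suc 0,0)"
    "(ud \<tau> t * W * ud \<tau> (-t)) $$ (Suc 0,Suc 0) = W $$ (Suc 0,Suc 0)"
proof -
  define x where "x = - t*pi/\<tau>"
  have u1: "ud \<tau> t = diagm (\<lambda>b. if b = 0 then cis x else cis (-x)) 2"
    unfolding ud_expl by (rule diagm_cong) (simp add: x_def)
  have u2: "ud \<tau> (-t) = diagm (\<lambda>b. if b = 0 then cis (-x) else cis x) 2"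
    unfolding ud_expl by (rule diagm_cong) (simp add: x_def)
  have c1: "cis x * cis (-x) = 1" "cis (-x) * cis x = 1" by (simp_all add: cis_mult)
  have c2: "cis x * cis x = cis (2*x)" "cis (-x) * cis (-x) = cnj (cis (2*x))" by (simp_all add: cis_mult cis_cnj)
  have c1': "cis x * (w * cis (-x)) = w" "cis (-x) * (w * cis x) = w" for w
    using c1 by (simp_all add: algebra_simps)
  have c2': "cis x * (w * cis x) = cis (2*x) * w" "cis (-x) * (w * cis (-x)) = cnj (cis (2*x)) * w" for w
    using c2 by (simp_all add: algebra_simps)
  let ?U1 = "diagm (\<lambda>b. if b = 0 then cis x else cis (-x)) 2"
  let ?U2 = "diagm (\<lambda>b. if b = 0 then cis (-x) else cis x) 2"
  have cA: "?U1 * W \<in> carrier_mat 2 2" using assms by (intro mult_carrier_mat) auto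
  note mm = mult2_idx[OF cA diagm_carrier] mult2_idx[OF diagm_carrier assms]
  show "(ud \<tau> t * W * ud \<tau> (-t)) $$ (0,0) = W $$ (0,0)"
    unfolding u1 u2 x_def[symmetric] by (simp del: index_mult_mat add: mm c1' c2' c1 c2)
  show "(ud \<tau> t * W * ud \<tau> (-t)) $$ (0,Suc 0) = cis (2 * (- t*pi/\<tau>)) * W $$ (0,Suc 0)"
    unfolding u1 u2 x_def[symmetric] by (simp del: index_mult_mat add: mm c1' c2' c1 c2)
  show "(ud \<tau> t * W * ud \<tau> (-t)) $$ (Suc 0,0) = cnj (cis (2 * (- t*pi/\<tau>))) * W $$ (Suc 0,0)"
    unfolding u1 u2 x_def[symmetric] by (simp del: index_mult_mat add: mm c1' c2' c1 c2)
  show "(ud \<tau> t * W * ud \<tau> (-t)) $$ (Suc 0,Suc 0) = W $$ (Suc 0,Suc 0)"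
    unfolding u1 u2 x_def[symmetric] by (simp del: index_mult_mat add: mm c1' c2' c1 c2)
qed

lemma ct_rhot: "ct (rhot l z) = rhot l z"
  by (rule mat2_eqI) (auto simp: ct2_idx)

lemma phi_qform: assumes "W \<in> carrier_mat 2 2"
  shows "qform W Phi = (W $$ (0,0) + W $$ (0,Suc 0) + W $$ (Suc 0,0) + W $$ (Suc 0,Suc 0)) / 2"
proof -
  have s: "complex_of_real (1 / sqrt 2) * complex_of_real (1 / sqrt 2) = 1/2"
    by (simp flip: of_real_mult)
  have "qform W Phi = (W $$ (0,0) + W $$ (0,Suc 0) + W $$ (Suc 0,0) + W $$ (Suc 0,Suc 0)) * (complex_of_real (1 / sqrt 2) * complex_of_real (1 / sqrt 2))"
    unfolding qform_def Phi_def by (simp add: sum2 algebra_simps)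
  then show ?thesis using s by simp
qed

lemma herm4:
  fixes p c C d xa xb ya yb Zaa Zab Zba Zbb :: complex
  assumes H: "\<And>v. v \<in> carrier_vec 4 \<Longrightarrow> Im (qform (mat 4 4 (\<lambda>(i,j). [[p,c,xa,xb],[C,d,ya,yb],[xa',xb',Zaa,Zab],[ya',yb',Zba,Zbb]] ! i ! j)) v) = 0"
  shows "Im p = 0" "Im d = 0" "C = cnj c"
proof -
  have four: "(4::nat) = Suc (Suc (Suc (Suc 0)))" by simp
  let ?M = "mat 4 4 (\<lambda>(i,j). [[p,c,xa,xb],[C,d,ya,yb],[xa',xb',Zaa,Zab],[ya',yb',Zba,Zbb]] ! i ! j)"
  have q: "qform ?M (vec 4 (\<lambda>i. [a,b,0,0] ! i)) = cnj a * p * a + cnj a * c * b + cnj b * C * a + cnj b * d * b" for a b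
    unfolding qform_def four by (simp add: lessThan_Suc)
  have h1: "Im p = 0" using H[of "vec 4 (\<lambda>i. [1,0,0,0] ! i)"] q[of 1 0] by simp
  have h2: "Im d = 0" using H[of "vec 4 (\<lambda>i. [0,1,0,0] ! i)"] q[of 0 1] by simp
  have h3: "Im (p + c + C + d) = 0" using H[of "vec 4 (\<lambda>i. [1,1,0,0] ! i)"] q[of 1 1] by simp
  have h4: "Im (p + \<i> * c - \<i> * C + d) = 0" using H[of "vec 4 (\<lambda>i. [1,\<i>,0,0] ! i)"] q[of 1 \<i>] by (simp add: algebra_simps)
  show "Im p = 0" "Im d = 0" using h1 h2 by auto
  show "C = cnj c" using h1 h2 h3 h4 by (simp add: complex_eq_iff)
qed

lemma kappa_id: "(cis y - 1) * cnj (cis y - 1) = complex_of_real (2 - 2 * cos y)"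
  by (simp add: complex_eq_iff algebra_simps power2_eq_square)



lemma limit_arg:
  fixes K A \<tau> :: real and \<kappa> :: "real \<Rightarrow> real"
  assumes K: "K \<ge> 0" and \<tau>: "\<tau> > 0" and H: "\<And>t. (1 + K * \<kappa> t)^n - 1 \<ge> \<kappa> t * A"
    and pos: "\<And>t. t \<in> {0<..<\<tau>} \<Longrightarrow> \<kappa> t > 0" and lim: "(\<kappa> \<longlongrightarrow> 0) (at_right 0)"
  shows "A \<le> real n * K"
proof -
  have ev: "eventually (\<lambda>t. A \<le> real n * K * (1 + K * \<kappa> t)^n) (at_right 0)"
    using eventually_at_right_real[OF \<tau>]
  proof (rule eventually_mono)
    fix t assume t: "t \<in> {0<..<\<tau>}"
    have kp: "\<kappa> t > 0" using pos[OF t] .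
    have "\<kappa> t * A \<le> (1 + K * \<kappa> t)^n - 1" using H .
    also have "\<dots> \<le> real n * (K * \<kappa> t) * (1 + K * \<kappa> t)^n"
      using kp K by (intro pow_bound) simp
    also have "\<dots> = \<kappa> t * (real n * K * (1 + K * \<kappa> t)^n)" by (simp add: algebra_simps)
    finally show "A \<le> real n * K * (1 + K * \<kappa> t)^n" using kp by simp
  qed
  have tl: "((\<lambda>t. real n * K * (1 + K * \<kappa> t)^n) \<longlongrightarrow> real n * K * (1 + K * 0)^n) (at_right 0)"
    by (intro tendsto_intros lim)
  have "A \<le> real n * K * (1 + K * 0)^n"
    by (rule tendsto_le[OF _ tl tendsto_const ev]) simp
  then show ?thesis by simp
qed

lemma kappa_lim: assumes "\<tau> \<noteq> 0" shows " ((\<lambda>t. 2 - 2 * cos (2 * (- t*pi/\<tau>))) \<longlongrightarrow> 0) (at_right 0)"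
proof -
  have "((\<lambda>t. 2 - 2 * cos (2 * (- t*pi/\<tau>))) \<longlongrightarrow> 2 - 2 * cos (2 * (- 0*pi/\<tau>))) (at_right 0)"
    by (intro tendsto_intros) (use assms in auto)
  then show ?thesis using assms by simp
qed

lemma kappa_pos: assumes tau: "\<tau> > 0" and t: "t \<in> {0<..<\<tau>/2}" shows "2 - 2 * cos (2 * (- t*pi/\<tau>)) > 0"
proof -
  have t0: "0 < t" and t1: "2*t < \<tau>" using t by auto
  have a: "0 < 2*t*pi/\<tau>" using t0 tau by simp
  have "2*t*pi < \<tau>*pi" using t1 by (simp add: mult_strict_right_mono)
  then have b: "2*t*pi/\<tau> < pi" using tau by (simp add: divide_less_eq mult.commute)
  have "cos (2*t*pi/\<tau>) < cos 0" by (rule cos_monotone_0_pi) (use a b in auto)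
  moreover have "2 * (- t*pi/\<tau>) = - (2*t*pi/\<tau>)" by simp
  then have "cos (2 * (- t*pi/\<tau>)) = cos (2*t*pi/\<tau>)" by (simp only: cos_minus)
  ultimately show ?thesis by simp
qed



lemma less4: "(i::nat) < 4 \<longleftrightarrow> i = 0 \<or> i = 1 \<or> i = 2 \<or> i = 3" by auto

lemma per_t:
  fixes \<tau> l t :: real and n :: nat and E
  assumes l0: "0 < l" and l1: "l < 1"
    and cp: "cptp (2^n) 2 E"
    and cov: "\<And>\<sigma> t. density (2^n) \<sigma> \<Longrightarrow> evol (qubit_ham \<tau>) t * E \<sigma> * evol (qubit_ham \<tau>) (-t)
                 = E (evol (total_ham (qubit_ham \<tau>) n) t * \<sigma> * evol (total_ham (qubit_ham \<tau>) n) (-t))"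
  defines "\<omega> \<equiv> E (tensor_pow n (rho l))"
  defines "p \<equiv> \<omega> $$ (0,0)" and "c \<equiv> \<omega> $$ (0,Suc 0)" and "C \<equiv> \<omega> $$ (Suc 0,0)" and "dd \<equiv> \<omega> $$ (Suc 0,Suc 0)"
  defines "K \<equiv> l^2/(1-l^2)" and "\<kappa> \<equiv> 2 - 2 * cos (2 * (- t*pi/\<tau>))"
  shows "Im p = 0 \<and> Im dd = 0 \<and> C = cnj c \<and> p + dd = 1 \<and>
    (\<forall>r::real. (1 + K * \<kappa>)^n - 1 \<ge> \<kappa> * ((cmod c)^2 * (2*r - r^2 * (Re p * (1 - Re p) - (cmod c)^2))))"
proof -
  define d where "d = (2::nat)^n"
  from cp have E_car: "\<And>A. A \<in> carrier_mat d d \<Longrightarrow> E A \<in> carrier_mat 2 2"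
    and E_tr: "\<And>A. A \<in> carrier_mat d d \<Longrightarrow> mtrace (E A) = mtrace A"
    and E_psd: "\<And>k X. psd (k*d) X \<Longrightarrow> psd (k*2) (ampliate k d 2 E X)"
    unfolding cptp_def d_def by auto
  define Rn where "Rn = tensor_pow n (Rm l)"
  define \<sigma> where "\<sigma> = tensor_pow n (rho l)"
  have Rn_c: "Rn \<in> carrier_mat d d" unfolding Rn_def d_def by simp
  have \<sigma>_eq: "\<sigma> = ct Rn * Rn"
  proof -
    have "\<sigma> = tensor_pow n (ct (Rm l) * Rm l)" unfolding \<sigma>_def using ctR_R[OF l0 l1] by simp
    also have "\<dots> = tensor_pow n (ct (Rm l)) * Rn" unfolding Rn_def
      by (rule tp_mult[OF ct_carrier[OF Rm_carrier] Rm_carrier])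
    finally show ?thesis by (simp add: Rn_def tp_ct)
  qed
  have \<sigma>_c: "\<sigma> \<in> carrier_mat d d" unfolding \<sigma>_def d_def by simp
  have tr_rho: "mtrace (rho l) = 1" by (simp add: mtrace2 rho_explicit)
  have dens: "density d \<sigma>" unfolding density_def
    using psd_gram[OF Rn_c] \<sigma>_eq tp_trace[OF rho_carrier, of n l] tr_rho by (simp add: \<sigma>_def)
  have \<omega>_eq: "\<omega> = E \<sigma>" by (simp add: \<omega>_def \<sigma>_def)
  have \<omega>_c: "\<omega> \<in> carrier_mat 2 2" using E_car[OF \<sigma>_c] \<omega>_eq by simp
  have tr\<omega>: "p + dd = 1" using E_tr[OF \<sigma>_c] dens \<omega>_eq \<omega>_c unfolding density_def p_def dd_def
    by (simp add: mtrace2)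
  define x where "x = - t*pi/\<tau>"
  define z where "z = cis (2*x)"
  define q where "q = qmat l (rhot l z)"
  define Qn where "Qn = tensor_pow n q"
  have Qn_c: "Qn \<in> carrier_mat d d" unfolding Qn_def q_def d_def by simp
  have zz: "z * cnj z = 1" by (simp add: z_def cis_cnj cis_mult)
  have ud_c: "ud \<tau> s \<in> carrier_mat 2 2" for s by (simp add: ud_def)
  define W where "W = tensor_pow n (rhot l z)"
  have W1: "evol (total_ham (qubit_ham \<tau>) n) t * \<sigma> * evol (total_ham (qubit_ham \<tau>) n) (-t) = W"
  proof -
    have "evol (total_ham (qubit_ham \<tau>) n) t * \<sigma> * evol (total_ham (qubit_ham \<tau>) n) (-t)
        = tensor_pow n (ud \<tau> t) * tensor_pow n (rho l) * tensor_pow n (ud \<tau> (-t))"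
      by (simp add: evol_total \<sigma>_def)
    also have "\<dots> = tensor_pow n (ud \<tau> t * rho l * ud \<tau> (-t))"
      by (simp add: tp_mult[OF ud_c rho_carrier] tp_mult[OF mult_carrier_mat[OF ud_c rho_carrier] ud_c])
    also have "\<dots> = W" by (simp add: conj_rho W_def z_def x_def)
    finally show ?thesis .
  qed
  have W2: "ct Rn * Qn = W"
  proof -
    have "W = tensor_pow n (ct (Rm l) * q)" unfolding W_def q_def using ctR_q[OF l0 l1 rhot_carrier] by simp
    also have "\<dots> = tensor_pow n (ct (Rm l)) * Qn" unfolding Qn_def
      by (rule tp_mult[OF ct_carrier[OF Rm_carrier]]) (simp add: q_def)
    finally show ?thesis by (simp add: Rn_def tp_ct)
  qed
  have W3: "ct Qn * Rn = W"
  proof -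
    have "ct W = ct Qn * ct (ct Rn)" using W2 ct_mult[OF ct_carrier[OF Rn_c] Qn_c] by simp
    moreover have "ct W = W" unfolding W_def by (simp add: tp_ct ct_rhot)
    ultimately show ?thesis by (simp add: ct_ct)
  qed
  have EW: "E W = ud \<tau> t * \<omega> * ud \<tau> (-t)"
    using cov[OF dens[unfolded d_def]] W1 \<omega>_eq by (simp add: evol_qubit)
  define Y where "Y = ct Qn * Qn"
  have Y_c: "Y \<in> carrier_mat d d" unfolding Y_def by (rule mult_carrier_mat[OF ct_carrier[OF Qn_c] Qn_c])
  have trY: "mtrace Y = complex_of_real ((1 + K * \<kappa>)^n)"
  proof -
    have "Y = tensor_pow n (ct q * q)" unfolding Y_def Qn_def
      by (simp add: tp_ct tp_mult[OF ct_carrier[OF qmat_carrier] qmat_carrier, unfolded q_def[symmetric]] q_def)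
    then have "mtrace Y = mtrace (ct q * q) ^ n"
      using tp_trace[OF mult_carrier_mat[OF ct_carrier[OF qmat_carrier] qmat_carrier], of n l "rhot l z"] by (simp add: q_def)
    also have "mtrace (ct q * q) = 1 + of_real l ^ 2 / (1 - of_real l ^ 2) * ((z - 1) * cnj (z - 1))"
      unfolding q_def by (rule trace_q[OF l0 l1 zz])
    also have "(z - 1) * cnj (z - 1) = complex_of_real \<kappa>" unfolding z_def \<kappa>_def x_def by (rule kappa_id)
    finally show ?thesis by (simp add: K_def)
  qed
  define N where "N = stackN d Rn Qn"
  have Mpsd: "psd (2*2) (ampliate 2 d 2 E (ct N * N))"
  proof -
    have "psd (2*d) (ct N * N)" unfolding N_def by (rule psd_gram[OF stackN_carrier])
    then show ?thesis using E_psd[of 2 "ct N * N"] by blast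
  qed
  define \<omega>t where "\<omega>t = ud \<tau> t * \<omega> * ud \<tau> (-t)"
  define Z where "Z = E Y"
  have Z_c: "Z \<in> carrier_mat 2 2" unfolding Z_def using E_car[OF Y_c] .
  define w where "w = z * c - c"
  define Wc where "Wc = cnj z * C - C"
  have t00: "\<omega>t $$ (0,0) = p" "\<omega>t $$ (0,Suc 0) = c + w" "\<omega>t $$ (Suc 0,0) = C + Wc" "\<omega>t $$ (Suc 0,Suc 0) = dd"
    unfolding \<omega>t_def using conj_omega[OF \<omega>_c, of \<tau> t]
    by (simp_all add: p_def c_def C_def dd_def w_def Wc_def z_def x_def)
  have blocks: "E (ct (blk Rn Qn 0) * blk Rn Qn 0) = \<omega>" "E (ct (blk Rn Qn 0) * blk Rn Qn (Suc 0)) = \<omega>t"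
    "E (ct (blk Rn Qn (Suc 0)) * blk Rn Qn 0) = \<omega>t" "E (ct (blk Rn Qn (Suc 0)) * blk Rn Qn (Suc 0)) = Z"
    by (simp_all add: blk_def \<omega>_eq \<sigma>_eq[symmetric] W2 W3 EW \<omega>t_def Z_def Y_def)
  define M where "M = mat 4 4 (\<lambda>(i,j). [[p,c,p,c+w],[C,dd,C+Wc,dd],[p,c+w,Z$$(0,0),Z$$(0,1)],[C+Wc,dd,Z$$(1,0),Z$$(1,1)]] ! i ! j)"
  have M_eq: "ampliate 2 d 2 E (ct N * N) = M"
    unfolding N_def ampl_stack[OF Rn_c Qn_c] M_def
  proof (rule eq_matI)
    fix i j assume "i < dim_row (mat 4 4 (\<lambda>(i,j). [[p,c,p,c+w],[C,dd,C+Wc,dd],[p,c+w,Z$$(0,0),Z$$(0,1)],[C+Wc,dd,Z$$(1,0),Z$$(1,1)]] ! i ! j))"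
      "j < dim_col (mat 4 4 (\<lambda>(i,j). [[p,c,p,c+w],[C,dd,C+Wc,dd],[p,c+w,Z$$(0,0),Z$$(0,1)],[C+Wc,dd,Z$$(1,0),Z$$(1,1)]] ! i ! j))"
    then have i: "i = 0 \<or> i = 1 \<or> i = 2 \<or> i = 3" and j: "j = 0 \<or> j = 1 \<or> j = 2 \<or> j = 3" by auto
    show "mat 4 4 (\<lambda>(i,j). E (ct (blk Rn Qn (i div 2)) * blk Rn Qn (j div 2)) $$ (i mod 2, j mod 2)) $$ (i,j)
        = mat 4 4 (\<lambda>(i,j). [[p,c,p,c+w],[C,dd,C+Wc,dd],[p,c+w,Z$$(0,0),Z$$(0,1)],[C+Wc,dd,Z$$(1,0),Z$$(1,1)]] ! i ! j) $$ (i,j)"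
      using i j by (auto simp: blocks t00 p_def c_def C_def dd_def)
  qed auto
  have Mv: "\<And>v. v \<in> carrier_vec 4 \<Longrightarrow> Im (qform M v) = 0 \<and> 0 \<le> Re (qform M v)"
    using Mpsd unfolding M_eq psd_def by auto
  have Him: "\<And>v. v \<in> carrier_vec 4 \<Longrightarrow> Im (qform M v) = 0" using Mv by blast
  have herm: "Im p = 0" "Im dd = 0" "C = cnj c"
    using herm4[where p=p and c=c and C=C and d=dd and xa=p and xb="c+w" and ya="C+Wc" and yb=dd
      and xa'=p and xb'="c+w" and ya'="C+Wc" and yb'=dd and Zaa="Z$$(0,0)" and Zab="Z$$(0,1)"
      and Zba="Z$$(1,0)" and Zbb="Z$$(1,1)", OF Him[unfolded M_def]] by auto
  have cpp: "cnj p = p" using herm(1) by (simp add: complex_eq_iff)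
  have cw: "cnj w = Wc" unfolding w_def Wc_def herm(3) by simp
  have ddp: "dd = 1 - p" using tr\<omega> by (simp add: algebra_simps)
  define P where "P = Re p"
  have pP: "p = complex_of_real P" using herm(1) by (simp add: P_def complex_eq_iff)
  have ineq: "(1 + K * \<kappa>)^n - 1 \<ge> \<kappa> * ((cmod c)^2 * (2*r - r^2 * (P * (1 - P) - (cmod c)^2)))" for r
  proof -
    define R where "R = complex_of_real r"
    let ?v0 = "vec 4 (\<lambda>i. [-(1 - R*c*Wc), -R*p*Wc, 1, 0] ! i)"
    let ?v1 = "vec 4 (\<lambda>i. [-R*dd*w, -(1 - R*C*w), 0, 1] ! i)"
    have "qform M ?v0 + qform M ?v1 = Z$$(0,0) + Z$$(1,1) - 1 - 2*R*w*Wc + R^2*(p*dd - c*C)*w*Wc"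
      unfolding M_def R_def by (rule key4[OF herm(3)[symmetric] cw cpp ddp])
    moreover have "0 \<le> Re (qform M ?v0)" "0 \<le> Re (qform M ?v1)" using Mv by auto
    ultimately have A: "0 \<le> Re (Z$$(0,0) + Z$$(1,1) - 1 - 2*R*w*Wc + R^2*(p*dd - c*C)*w*Wc)"
      by (metis add_nonneg_nonneg plus_complex.sel(1))
    have trZ: "Z$$(0,0) + Z$$(1,1) = complex_of_real ((1 + K * \<kappa>)^n)"
      using mtrace2[OF Z_c] E_tr[OF Y_c] trY unfolding Z_def by simp
    have wW: "w * Wc = complex_of_real ((cmod c)^2 * \<kappa>)"
    proof -
      have "w * Wc = (c * cnj c) * ((z - 1) * cnj (z - 1))" unfolding cw[symmetric] w_def by (simp add: algebra_simps)
      also have "(z - 1) * cnj (z - 1) = complex_of_real \<kappa>" unfolding z_def \<kappa>_def x_def by (rule kappa_id)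
      also have "c * cnj c = complex_of_real ((cmod c)^2)" by (rule complex_norm_square[symmetric])
      finally show ?thesis by simp
    qed
    have det: "p*dd - c*C = complex_of_real (P * (1 - P) - (cmod c)^2)"
      unfolding ddp herm(3) pP using complex_norm_square[of c] by simp
    have eq: "Z$$(0,0) + Z$$(1,1) - 1 - 2*R*w*Wc + R^2*(p*dd - c*C)*w*Wc
       = complex_of_real ((1 + K * \<kappa>)^n - 1 - 2*r*((cmod c)^2 * \<kappa>) + r^2 * (P * (1 - P) - (cmod c)^2) * ((cmod c)^2 * \<kappa>))"
      unfolding trZ det R_def mult.assoc[of _ w Wc] wW
      by (simp add: mult.assoc)
    from A have "0 \<le> (1 + K * \<kappa>)^n - 1 - 2*r*((cmod c)^2 * \<kappa>) + r^2 * (P * (1 - P) - (cmod c)^2) * ((cmod c)^2 * \<kappa>)"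
      by (simp only: eq Re_complex_of_real)
    then show ?thesis by (simp add: algebra_simps)
  qed
  show ?thesis using herm tr\<omega> ineq by (simp add: P_def)
qed

lemma final_arith: fixes a :: real assumes "a > 0"
  shows "1 / (4*a + 4) \<ge> 1/(4*a) - 1/(4*a^2)"
proof -
  have "1/(4*a) - 1/(4*a^2) = (a - 1) / (4*a^2)" using assms by (simp add: field_simps power2_eq_square)
  also have "\<dots> \<le> 1 / (4*a + 4)"
  proof -
    have "(a - 1) * (4*a + 4) \<le> 1 * (4*a^2)" by (simp add: algebra_simps power2_eq_square)
    then show ?thesis using assms by (simp add: divide_le_eq le_divide_eq field_simps)
  qed
  finally show ?thesis .
qed

theorem mainTheorem19:
  fixes \<tau> l :: real
  assumes "0 < \<tau>" and "0 < l" and "l < 1"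
  shows "\<exists>C N. \<forall>n \<ge> N. \<forall>E.
           TI_op (2 ^ n) 2 (total_ham (qubit_ham \<tau>) n) (qubit_ham \<tau>) E \<longrightarrow>
           1 - Re (qform (E (tensor_pow n (rho l))) Phi)
             \<ge> (1 / real n) * ((1 - l\<^sup>2) / (4 * l\<^sup>2)) - C / (real n)\<^sup>2"
proof -
  note \<tau> = assms(1) and l0 = assms(2) and l1 = assms(3)
  define K where "K = l^2/(1-l^2)"
  have l2: "l^2 < 1" using l0 l1 by (simp add: power_less_one_iff)
  have Kpos: "K > 0" using l0 l2 by (simp add: K_def)
  show ?thesis
  proof (intro exI[of _ "1/(4*K^2)"] exI[of _ "1::nat"] allI impI)
    fix n :: nat and E assume n: "1 \<le> n" and TI: "TI_op (2 ^ n) 2 (total_ham (qubit_ham \<tau>) n) (qubit_ham \<tau>) E"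
    have cp: "cptp (2^n) 2 E" using TI unfolding TI_op_def by auto
    have cov: "\<And>\<sigma> t. density (2^n) \<sigma> \<Longrightarrow> evol (qubit_ham \<tau>) t * E \<sigma> * evol (qubit_ham \<tau>) (-t)
                 = E (evol (total_ham (qubit_ham \<tau>) n) t * \<sigma> * evol (total_ham (qubit_ham \<tau>) n) (-t))"
      using TI unfolding TI_op_def by auto
    define \<omega> where "\<omega> = E (tensor_pow n (rho l))"
    define p where "p = \<omega> $$ (0,0)"
    define c where "c = \<omega> $$ (0,Suc 0)"
    define C where "C = \<omega> $$ (Suc 0,0)"
    define dd where "dd = \<omega> $$ (Suc 0,Suc 0)"
    define \<kappa> where "\<kappa> = (\<lambda>t::real. 2 - 2 * cos (2 * (- t*pi/\<tau>)))"
    define dt where "dt = Re p * (1 - Re p) - (cmod c)^2"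
    have PT: "Im p = 0 \<and> Im dd = 0 \<and> C = cnj c \<and> p + dd = 1 \<and>
       (\<forall>r::real. (1 + K * \<kappa> t)^n - 1 \<ge> \<kappa> t * ((cmod c)^2 * (2*r - r^2 * dt)))" for t
      using per_t[OF l0 l1 cp cov, of t] unfolding \<omega>_def p_def c_def C_def dd_def K_def \<kappa>_def dt_def by blast
    have herm: "Im p = 0" "C = cnj c" "p + dd = 1" using PT[of 0] by auto
    have Ar: "real n * K \<ge> (cmod c)^2 * (2*r - r^2 * dt)" for r
    proof (rule limit_arg[of K "\<tau>/2" \<kappa>])
      show "0 \<le> K" using Kpos by simp
      show "0 < \<tau>/2" using \<tau> by simp
      show "\<kappa> t * ((cmod c)^2 * (2*r - r^2 * dt)) \<le> (1 + K * \<kappa> t)^n - 1" for t using PT[of t] by blast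
      show "0 < \<kappa> t" if "t \<in> {0<..<\<tau>/2}" for t using kappa_pos[OF \<tau> that] by (simp add: \<kappa>_def)
      show "(\<kappa> \<longlongrightarrow> 0) (at_right 0)" unfolding \<kappa>_def using kappa_lim[of \<tau>] \<tau> by simp
    qed
    have NK: "real n * K > 0" using n Kpos by simp
    have dt_le: "dt \<le> 1/4 - (Re c)^2"
    proof -
      have "Re p * (1 - Re p) \<le> 1/4"
      proof -
        have "0 \<le> (Re p - 1/2)^2" by simp
        then show ?thesis by (simp add: power2_eq_square algebra_simps)
      qed
      moreover have "(Re c)^2 \<le> (cmod c)^2" using abs_Re_le_cmod[of c]
        by (metis abs_ge_zero power2_abs power_mono)
      ultimately show ?thesis unfolding dt_def by linarith
    qed
    have c2: "(cmod c)^2 \<ge> (Re c)^2" using abs_Re_le_cmod[of c]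
        by (metis abs_ge_zero power2_abs power_mono)
    have fin: "1/2 - Re c \<ge> 1 / (4 * (real n * K) + 4)"
      by (rule final_real[OF NK Ar dt_le c2])
    have \<omega>_c: "\<omega> \<in> carrier_mat 2 2"
      using cp unfolding cptp_def \<omega>_def by (auto intro!: tp_carrier[OF rho_carrier, of n l, unfolded])
    have eps: "1 - Re (qform \<omega> Phi) = 1/2 - Re c"
    proof -
      have "qform \<omega> Phi = (p + c + C + dd) / 2" using phi_qform[OF \<omega>_c] by (simp add: p_def c_def C_def dd_def)
      also have "\<dots> = (1 + c + cnj c) / 2"
      proof -
        have "p + c + C + dd = (p + dd) + c + C" by (simp add: algebra_simps)
        also have "\<dots> = 1 + c + cnj c" by (simp only: herm(2) herm(3))
        finally show ?thesis by (rule arg_cong[where f="\<lambda>x. x/2"])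
      qed
      finally have "qform \<omega> Phi = (1 + c + cnj c) / 2" .
      from arg_cong[where f=Re, OF this] have "Re (qform \<omega> Phi) = (1 + Re c + Re c) / 2" by (simp only: Re_divide_numeral plus_complex.sel one_complex.sel cnj.sel)
      then show ?thesis by simp
    qed
    have "(1 / real n) * ((1 - l\<^sup>2) / (4 * l\<^sup>2)) - 1/(4*K^2) / (real n)\<^sup>2
        = 1/(4*(real n * K)) - 1/(4*(real n * K)^2)"
      using l0 l2 n by (simp add: K_def field_simps power2_eq_square)
    also have "\<dots> \<le> 1 / (4 * (real n * K) + 4)" by (rule final_arith[OF NK])
    also have "\<dots> \<le> 1 - Re (qform (E (tensor_pow n (rho l))) Phi)" using fin eps by (simp add: \<omega>_def)
    finally show "(1 / real n) * ((1 - l\<^sup>2) / (4 * l\<^sup>2)) - 1/(4*K^2) / (real n)\<^sup>2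
        \<le> 1 - Re (qform (E (tensor_pow n (rho l))) Phi)" .
  qed
qed


end
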